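(* Let $\varphi$ be a bounded, increasing, submodular setfunction on a sigma-algebra $(J,\mathcal{B})$, continuous from above, with $\varphi(\emptyset)=0$. Let $(\mathcal{P}_n\colon n\in\mathbb{N})$ be a refining sequence of partitions of $J$, each into finitely many sets of $\mathcal{B}$, such that $\bigcup_n\mathcal{P}_n$ generates $\mathcal{B}$. Then $\varphi/\mathcal{P}_n\rightarrowtail\varphi$.
   Context: $\varphi$ is increasing if $X\subseteq Y$ implies $\varphi(X)\le\varphi(Y)$, submodular if $\varphi(X)+\varphi(Y)\ge\varphi(X\cap Y)+\varphi(X\cup Y)$, and continuous from above if $\varphi(\bigcap_nX_n)=\lim_n\varphi(X_n)$ for every decreasing sequence $X_1\supseteq X_2\supseteq\dots$ in $\mathcal{B}$. A sequence of partitions is refining if $\mathcal{P}_{n+1}$ refines $\mathcal{P}_n$. For a finite partition $\mathcal{P}$ of $J$ into sets of $\mathcal{B}$, the quotient $\varphi/\mathcal{P}$ is the setfunction on subsets $\mathcal{S}\subseteq\mathcal{P}$ given by $\mathcal{S}\mapsto\varphi(\bigcup\mathcal{S})$. More generally, for a setfunction $\psi$ on a set-algebra $(I,\mathcal{C})$ and a map $F\colon I\to[k]$ with $F^{-1}(i)\in\mathcal{C}$, the quotient $\psi\circ F^{-1}$ is $A\mapsto\psi(F^{-1}(A))$ on $2^{[k]}$, and $Q_k(\psi)\subseteq\mathbb{R}^{2^k}$ is the set of all such quotients. $\psi_n\rightarrowtail\psi$ means that for every $k\in\mathbb{N}$ the Hausdorff distance in Euclidean $\mathbb{R}^{2^k}$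 between $Q_k(\psi_n)$ and $Q_k(\psi)$ tends to $0$. *)

theory Defs
  imports "HOL-Analysis.Analysis"
begin

definition sf_bounded :: "'a set set \<Rightarrow> ('a set \<Rightarrow> real) \<Rightarrow> bool" where
  "sf_bounded B \<phi> \<longleftrightarrow> (\<exists>C. \<forall>X\<in>B. \<bar>\<phi> X\<bar> \<le> C)"

definition sf_increasing :: "'a set set \<Rightarrow> ('a set \<Rightarrow> real) \<Rightarrow> bool" where
  "sf_increasing B \<phi> \<longleftrightarrow> (\<forall>X\<in>B. \<forall>Y\<in>B. X \<subseteq> Y \<longrightarrow> \<phi> X \<le> \<phi> Y)"

definition sf_submodular :: "'a set set \<Rightarrow> ('a set \<Rightarrow> real) \<Rightarrow> bool" where
  "sf_submodular B \<phi> \<longleftrightarrow>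
     (\<forall>X\<in>B. \<forall>Y\<in>B. \<phi> X + \<phi> Y \<ge> \<phi> (X \<inter> Y) + \<phi> (X \<union> Y))"

definition sf_cont_above :: "'a set set \<Rightarrow> ('a set \<Rightarrow> real) \<Rightarrow> bool" where
  "sf_cont_above B \<phi> \<longleftrightarrow>
     (\<forall>X :: nat \<Rightarrow> 'a set. range X \<subseteq> B \<longrightarrow> decseq X \<longrightarrow>
        (\<lambda>n. \<phi> (X n)) \<longlonglongrightarrow> \<phi> (\<Inter>n. X n))"

definition fin_partition :: "'a set \<Rightarrow> 'a set set \<Rightarrow> 'a set set \<Rightarrow> bool" where
  "fin_partition J B P \<longleftrightarrow> finite P \<and> P \<subseteq> B \<and> {} \<notin> P \<and> \<Union>P = J \<and> disjoint P"

definition partition_refines :: "'a set set \<Rightarrow> 'a set set \<Rightarrow> bool" where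
  "partition_refines Q P \<longleftrightarrow> (\<forall>X\<in>Q. \<exists>Y\<in>P. X \<subseteq> Y)"

text \<open>Quotient phi/P: setfunction on subsets of P.\<close>
definition sf_quot :: "('a set \<Rightarrow> real) \<Rightarrow> 'a set set \<Rightarrow> real" where
  "sf_quot \<phi> S = \<phi> (\<Union>S)"

text \<open>Q_k(psi) for psi on the set-algebra (I,C); [k] = {0..<k}; a point of R^(2^k)
  is a function on subsets of [k] (extended by 0 outside Pow [k]).\<close>
definition Qk :: "nat \<Rightarrow> 'i set \<Rightarrow> 'i set set \<Rightarrow> ('i set \<Rightarrow> real) \<Rightarrow> (nat set \<Rightarrow> real) set" where
  "Qk k I C \<psi> = {(\<lambda>A. if A \<subseteq> {..<k} then \<psi> {x\<in>I. F x \<in> A} else 0) | F.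
       (\<forall>x\<in>I. F x < k) \<and> (\<forall>i<k. {x\<in>I. F x = i} \<in> C)}"

definition eucl_k :: "nat \<Rightarrow> (nat set \<Rightarrow> real) \<Rightarrow> (nat set \<Rightarrow> real) \<Rightarrow> real" where
  "eucl_k k f g = sqrt (\<Sum>A\<in>Pow {..<k}. (f A - g A)^2)"

definition hausdist_k :: "nat \<Rightarrow> (nat set \<Rightarrow> real) set \<Rightarrow> (nat set \<Rightarrow> real) set \<Rightarrow> ereal" where
  "hausdist_k k S T = Inf {ereal e | e. e \<ge> 0 \<and>
      (\<forall>x\<in>S. \<exists>y\<in>T. eucl_k k x y \<le> e) \<and> (\<forall>y\<in>T. \<exists>x\<in>S. eucl_k k x y \<le> e)}"

definition quot_conv ::
  "(nat \<Rightarrow> 'i set) \<Rightarrow> (nat \<Rightarrow> 'i set set) \<Rightarrow> (nat \<Rightarrow> 'i set \<Rightarrow> real) \<Rightarrow>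
   'j set \<Rightarrow> 'j set set \<Rightarrow> ('j set \<Rightarrow> real) \<Rightarrow> bool" where
  "quot_conv In Cn \<psi>n I C \<psi> \<longleftrightarrow>
     (\<forall>k. (\<lambda>n. hausdist_k k (Qk k (In n) (Cn n) (\<psi>n n)) (Qk k I C \<psi>)) \<longlonglongrightarrow> 0)"

end

theory Submission imports Defs begin


lemma grid:
  fixes Q :: "(nat set \<Rightarrow> real) set"
  assumes bd: "\<And>y A. y \<in> Q \<Longrightarrow> \<bar>y A\<bar> \<le> C" and d: "\<delta> > 0"
  shows "\<exists>R. finite R \<and> R \<subseteq> Q \<and> (\<forall>y\<in>Q. \<exists>r\<in>R. \<forall>A\<subseteq>{..<k}. \<bar>y A - r A\<bar> \<le> \<delta>)"
proof -
  define rd where "rd y = (\<lambda>A. if A \<in> Pow {..<k} then \<lfloor>y A / \<delta>\<rfloor> else 0)" for y :: "nat set \<Rightarrow> real"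
  define M where "M = \<lceil>C / \<delta>\<rceil> + 1"
  have bnds: "- M \<le> \<lfloor>y A / \<delta>\<rfloor> \<and> \<lfloor>y A / \<delta>\<rfloor> \<le> M" if y: "y \<in> Q" for y A
  proof -
    have yb: "- C \<le> y A" "y A \<le> C" using bd[OF y, of A] by linarith+
    have 1: "- (C / \<delta>) \<le> y A / \<delta>" "y A / \<delta> \<le> C / \<delta>"
      using divide_right_mono[OF yb(1), of \<delta>] divide_right_mono[OF yb(2), of \<delta>] d by auto
    have c: "C / \<delta> \<le> of_int \<lceil>C / \<delta>\<rceil>" by (rule le_of_int_ceiling)
    show ?thesis unfolding M_def le_floor_iff floor_le_iff using 1 c by (simp, linarith)
  qed
  have "rd ` Q \<subseteq> {g. \<forall>A. (A \<in> Pow {..<k} \<longrightarrow> g A \<in> {-M..M}) \<and> (A \<notin> Pow {..<k} \<longrightarrow> g A = 0)}"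
    using bnds unfolding rd_def by (auto split: if_split_asm)
  then have fin: "finite (rd ` Q)"
    using finite_set_of_finite_funs[of "Pow {..<k}" "{-M..M}" 0] finite_subset by auto
  define pick where "pick g = (SOME y. y \<in> Q \<and> rd y = g)" for g
  have pk: "pick (rd y) \<in> Q \<and> rd (pick (rd y)) = rd y" if "y \<in> Q" for y
    unfolding pick_def by (rule someI[of _ y]) (use that in auto)
  show ?thesis
  proof (intro exI[of _ "pick ` rd ` Q"] conjI ballI)
    show "finite (pick ` rd ` Q)" using fin by simp
    show "pick ` rd ` Q \<subseteq> Q" using pk by auto
    fix y assume y: "y \<in> Q"
    let ?r = "pick (rd y)"
    have "\<forall>A\<subseteq>{..<k}. \<bar>y A - ?r A\<bar> \<le> \<delta>"
    proof (intro allI impI)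
      fix A assume A: "A \<subseteq> {..<k}"
      have "rd ?r A = rd y A" using pk[OF y] by simp
      then have fl: "\<lfloor>?r A / \<delta>\<rfloor> = \<lfloor>y A / \<delta>\<rfloor>" using A unfolding rd_def by simp
      define m where "m = \<lfloor>y A / \<delta>\<rfloor>"
      have a: "of_int m \<le> y A / \<delta>" "y A / \<delta> < of_int m + 1" unfolding m_def by linarith+
      have b: "of_int m \<le> ?r A / \<delta>" "?r A / \<delta> < of_int m + 1" unfolding m_def fl[symmetric] by linarith+
      have a1: "of_int m * \<delta> \<le> y A" using a(1) d by (simp add: pos_le_divide_eq)
      have a2: "y A < of_int m * \<delta> + \<delta>" using a(2) d by (simp add: pos_divide_less_eq distrib_right)
      have b1: "of_int m * \<delta> \<le> ?r A" using b(1) d by (simp add: pos_le_divide_eq)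
      have b2: "?r A < of_int m * \<delta> + \<delta>" using b(2) d by (simp add: pos_divide_less_eq distrib_right)
      show "\<bar>y A - ?r A\<bar> \<le> \<delta>" using a1 a2 b1 b2 by linarith
    qed
    then show "\<exists>r\<in>pick ` rd ` Q. \<forall>A\<subseteq>{..<k}. \<bar>y A - r A\<bar> \<le> \<delta>" using y by blast
  qed
qed

lemma eucl_bound:
  assumes "\<delta> \<ge> 0" "\<forall>A\<subseteq>{..<k}. \<bar>f A - g A\<bar> \<le> \<delta>"
  shows "eucl_k k f g \<le> sqrt (2^k) * \<delta>"
proof -
  have "(\<Sum>A\<in>Pow {..<k}. (f A - g A)^2) \<le> (\<Sum>A\<in>Pow {..<k}. \<delta>^2)"
  proof (rule sum_mono)
    fix A assume "A \<in> Pow {..<k}"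
    then have "\<bar>f A - g A\<bar> \<le> \<bar>\<delta>\<bar>" using assms by auto
    then show "(f A - g A)^2 \<le> \<delta>^2" by (simp add: abs_le_square_iff)
  qed
  also have "\<dots> = 2^k * \<delta>^2" by (simp add: card_Pow)
  finally have "eucl_k k f g \<le> sqrt (2^k * \<delta>^2)" unfolding eucl_k_def by (rule real_sqrt_le_mono)
  also have "sqrt (2^k * \<delta>^2) = sqrt (2^k) * \<delta>" using assms(1) by (simp add: real_sqrt_mult)
  finally show ?thesis .
qed

lemma eucl_self: "eucl_k k f f = 0"
  unfolding eucl_k_def by simp

lemma haus_le:
  assumes "e \<ge> 0" "\<forall>x\<in>S. \<exists>y\<in>T. eucl_k k x y \<le> e" "\<forall>y\<in>T. \<exists>x\<in>S. eucl_k k x y \<le> e"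
  shows "hausdist_k k S T \<le> ereal e"
  unfolding hausdist_k_def by (rule Inf_lower) (use assms in auto)

lemma haus_ge: "0 \<le> hausdist_k k S T"
  unfolding hausdist_k_def by (rule Inf_greatest) auto

locale thm43 = sigma_algebra J B for J :: "'a set" and B +
  fixes \<phi> :: "'a set \<Rightarrow> real" and P :: "nat \<Rightarrow> 'a set set"
  assumes bnd: "sf_bounded B \<phi>" and inc: "sf_increasing B \<phi>" and sub: "sf_submodular B \<phi>"
    and cont: "sf_cont_above B \<phi>" and emp: "\<phi> {} = 0"
    and part: "\<And>n. fin_partition J B (P n)"
    and refn: "\<And>n. partition_refines (P (Suc n)) (P n)"
    and gen: "sigma_sets J (\<Union>n. P n) = B"
begin

definition U :: "nat \<Rightarrow> 'a set set" where "U n = {\<Union>S | S. S \<subseteq> P n}"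

lemma P_fin: "finite (P n)" and P_B: "P n \<subseteq> B" and P_J: "\<Union>(P n) = J"
  and P_disj: "disjoint (P n)"
  using part[of n] unfolding fin_partition_def by auto

lemma refines_trans: "n \<le> m \<Longrightarrow> Z \<in> P m \<Longrightarrow> \<exists>W\<in>P n. Z \<subseteq> W"
proof (induction m arbitrary: Z rule: dec_induct)
  case base then show ?case by auto
next
  case (step m)
  from refn[of m] step.prems obtain W where W: "W \<in> P m" "Z \<subseteq> W"
    unfolding partition_refines_def by auto
  from step.IH[OF W(1)] obtain W' where "W' \<in> P n" "W \<subseteq> W'" by auto
  then show ?case using W(2) by (intro bexI[of _ W']) auto
qed

lemma block_dichot: assumes "Z \<in> P n" "Y \<in> U n" shows "Z \<subseteq> Y \<or> Z \<inter> Y = {}"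
proof -
  from assms(2) obtain S where S: "S \<subseteq> P n" "Y = \<Union>S" unfolding U_def by auto
  show ?thesis
  proof (cases "\<exists>W\<in>S. Z \<inter> W \<noteq> {}")
    case True
    then obtain W where W: "W \<in> S" "Z \<inter> W \<noteq> {}" by auto
    then have "Z = W" using P_disj[of n] S assms(1) by (meson disjointD subsetD)
    then show ?thesis using W S by auto
  next
    case False then show ?thesis using S by auto
  qed
qed

lemma U_B: "Y \<in> U n \<Longrightarrow> Y \<in> B"
  unfolding U_def using P_fin P_B by (auto intro!: finite_Union dest: finite_subset)

lemma U_J: "Y \<in> U n \<Longrightarrow> Y \<subseteq> J"
  using U_B sets_into_space by auto

lemma U_mono: assumes "n \<le> m" "Y \<in> U n" shows "Y \<in> U m"
proof -
  let ?S = "{Z\<in>P m. Z \<subseteq> Y}"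
  have "\<Union>?S = Y"
  proof
    show "\<Union>?S \<subseteq> Y" by auto
    show "Y \<subseteq> \<Union>?S"
    proof
      fix x assume x: "x \<in> Y"
      then have "x \<in> J" using U_J assms by auto
      then obtain Z where Z: "Z \<in> P m" "x \<in> Z" using P_J[of m] by auto
      then obtain W where W: "W \<in> P n" "Z \<subseteq> W" using refines_trans assms by blast
      then have "W \<subseteq> Y" using block_dichot[OF W(1) assms(2)] x Z by auto
      then show "x \<in> \<Union>?S" using Z W by auto
    qed
  qed
  then show ?thesis unfolding U_def by (metis (mono_tags, lifting) mem_Collect_eq subsetI)
qed

lemma U_Un: "X \<in> U n \<Longrightarrow> Y \<in> U n \<Longrightarrow> X \<union> Y \<in> U n"
  unfolding U_def by auto (metis Union_Un_distrib le_sup_iff)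

lemma U_empty: "{} \<in> U n"
  unfolding U_def by auto

lemma U_block: "Z \<in> P n \<Longrightarrow> Z \<in> U n"
  unfolding U_def by (auto intro!: exI[of _ "{Z}"])

lemma U_compl: assumes "Y \<in> U n" shows "J - Y \<in> U n"
proof -
  from assms obtain S where S: "S \<subseteq> P n" "Y = \<Union>S" unfolding U_def by auto
  have "J - Y = \<Union>(P n - S)"
  proof
    show "J - Y \<subseteq> \<Union>(P n - S)" using S P_J[of n] by auto
    show "\<Union>(P n - S) \<subseteq> J - Y"
    proof
      fix x assume "x \<in> \<Union>(P n - S)"
      then obtain Z where Z: "Z \<in> P n" "Z \<notin> S" "x \<in> Z" by auto
      have "x \<notin> Y"
      proof
        assume "x \<in> Y" then obtain W where "W \<in> S" "x \<in> W" using S by auto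
        then show False using Z P_disj[of n] S by (metis disjointD disjoint_iff subsetD)
      qed
      then show "x \<in> J - Y" using Z P_J[of n] by auto
    qed
  qed
  then show ?thesis unfolding U_def by auto
qed

lemma phi_mono: "X \<in> B \<Longrightarrow> Y \<in> B \<Longrightarrow> X \<subseteq> Y \<Longrightarrow> \<phi> X \<le> \<phi> Y"
  using inc unfolding sf_increasing_def by auto

lemma phi_nonneg: "X \<in> B \<Longrightarrow> 0 \<le> \<phi> X"
  using phi_mono[of "{}" X] emp by auto

lemma phi_subadd: assumes "X \<in> B" "Y \<in> B" shows "\<phi> (X \<union> Y) \<le> \<phi> X + \<phi> Y"
  using sub assms phi_nonneg[of "X \<inter> Y"] unfolding sf_submodular_def by force

lemma phi_sum: "finite I \<Longrightarrow> (\<And>i. i \<in> I \<Longrightarrow> Z i \<in> B) \<Longrightarrow> \<phi> (\<Union>i\<in>I. Z i) \<le> (\<Sum>i\<in>I. \<phi> (Z i))"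
proof (induction I rule: finite_induct)
  case empty then show ?case using emp by simp
next
  case (insert i I)
  have "\<phi> (\<Union>j\<in>insert i I. Z j) = \<phi> (Z i \<union> (\<Union>j\<in>I. Z j))" by simp
  also have "\<dots> \<le> \<phi> (Z i) + \<phi> (\<Union>j\<in>I. Z j)"
    using insert by (intro phi_subadd) auto
  also have "\<dots> \<le> (\<Sum>j\<in>insert i I. \<phi> (Z j))" using insert by auto
  finally show ?case .
qed

definition sd :: "'a set \<Rightarrow> 'a set \<Rightarrow> 'a set" where "sd X Y = (X - Y) \<union> (Y - X)"

lemma sd_B: "X \<in> B \<Longrightarrow> Y \<in> B \<Longrightarrow> sd X Y \<in> B"
  unfolding sd_def by auto

lemma phi_diff_abs: assumes "X \<in> B" "Y \<in> B" shows "\<bar>\<phi> X - \<phi> Y\<bar> \<le> \<phi> (sd X Y)"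
proof -
  have "\<phi> X \<le> \<phi> (Y \<union> sd X Y)" using assms sd_B by (intro phi_mono) (auto simp: sd_def)
  also have "\<dots> \<le> \<phi> Y + \<phi> (sd X Y)" using assms sd_B phi_subadd by auto
  finally have 1: "\<phi> X \<le> \<phi> Y + \<phi> (sd X Y)" .
  have "\<phi> Y \<le> \<phi> (X \<union> sd X Y)" using assms sd_B by (intro phi_mono) (auto simp: sd_def)
  also have "\<dots> \<le> \<phi> X + \<phi> (sd X Y)" using assms sd_B phi_subadd by auto
  finally show ?thesis using 1 by auto
qed

lemma cont_lemma: "range X \<subseteq> B \<Longrightarrow> decseq X \<Longrightarrow> (\<lambda>n. \<phi> (X n)) \<longlonglongrightarrow> \<phi> (\<Inter>n. X n)"
  using cont unfolding sf_cont_above_def by blast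

definition appr :: "'a set \<Rightarrow> bool" where
  "appr X \<longleftrightarrow> (\<forall>\<delta>>0. \<exists>n. \<exists>Y\<in>U n. \<phi> (sd X Y) < \<delta>)"

lemma appr_Un: assumes "X1 \<in> B" "X2 \<in> B" "appr X1" "appr X2" shows "appr (X1 \<union> X2)"
  unfolding appr_def
proof (intro allI impI)
  fix \<delta> :: real assume d: "\<delta> > 0"
  obtain n1 Y1 where 1: "Y1 \<in> U n1" "\<phi> (sd X1 Y1) < \<delta>/2" using assms(3) d unfolding appr_def
    by (meson half_gt_zero)
  obtain n2 Y2 where 2: "Y2 \<in> U n2" "\<phi> (sd X2 Y2) < \<delta>/2" using assms(4) d unfolding appr_def
    by (meson half_gt_zero)
  let ?n = "max n1 n2"
  have Y: "Y1 \<union> Y2 \<in> U ?n" using U_mono 1 2 U_Un by (meson max.cobounded1 max.cobounded2)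
  have s1: "sd X1 Y1 \<in> B" "sd X2 Y2 \<in> B" using assms 1 2 U_B sd_B by auto
  have "\<phi> (sd (X1 \<union> X2) (Y1 \<union> Y2)) \<le> \<phi> (sd X1 Y1 \<union> sd X2 Y2)"
    using assms U_B[OF Y] s1 by (intro phi_mono sd_B) (auto simp: sd_def)
  also have "\<dots> \<le> \<phi> (sd X1 Y1) + \<phi> (sd X2 Y2)"
    using assms 1 2 U_B sd_B[of X1 Y1] sd_B[of X2 Y2] by (intro phi_subadd) auto
  finally show "\<exists>n. \<exists>Y\<in>U n. \<phi> (sd (X1 \<union> X2) Y) < \<delta>" using 1 2 Y by force
qed

lemma appr_empty: "appr {}"
  unfolding appr_def sd_def using U_empty emp by (intro allI impI exI[of _ 0] bexI[of _ "{}"]) auto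

lemma appr_finUN: fixes M :: nat shows "(\<And>i. A i \<in> B) \<Longrightarrow> (\<And>i. appr (A i)) \<Longrightarrow> appr (\<Union>i<M. A i)"
proof (induction M)
  case 0 then show ?case using appr_empty by simp
next
  case (Suc M)
  have "(\<Union>i<Suc M. A i) = (\<Union>i<M. A i) \<union> A M" by (auto simp: lessThan_Suc)
  moreover have "(\<Union>i<M. A i) \<in> B" using Suc by auto
  ultimately show ?case using Suc appr_Un by metis
qed

lemma appr_all: "X \<in> B \<Longrightarrow> appr X"
proof -
  assume "X \<in> B"
  then have "X \<in> sigma_sets J (\<Union>n. P n)" using gen by simp
  then show "appr X"
  proof (induction rule: sigma_sets.induct)
    case (Basic a)
    then obtain n where "a \<in> P n" by auto
    then show ?case using U_block emp unfolding appr_def by (force simp: sd_def)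
  next
    case Empty then show ?case by (rule appr_empty)
  next
    case (Compl a)
    have aJ: "a \<subseteq> J" using Compl(1) gen sets_into_space by auto
    show ?case unfolding appr_def
    proof (intro allI impI)
      fix \<delta> :: real assume "\<delta> > 0"
      then obtain n Y where Y: "Y \<in> U n" "\<phi> (sd a Y) < \<delta>" using Compl(2) unfolding appr_def by auto
      have "sd (J - a) (J - Y) = sd a Y" using aJ U_J[OF Y(1)] by (auto simp: sd_def)
      then show "\<exists>n. \<exists>Y\<in>U n. \<phi> (sd (J - a) Y) < \<delta>" using Y U_compl by metis
    qed
  next
    case (Union A)
    have AB: "A i \<in> B" for i using Union(1) gen by auto
    let ?X = "\<Union>(range A)"
    let ?V = "\<lambda>M. \<Union>i<M. A i"
    have XB: "?X \<in> B" using AB by auto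
    have VB: "?V M \<in> B" for M using AB by auto
    show ?case unfolding appr_def
    proof (intro allI impI)
      fix \<delta> :: real assume d: "\<delta> > 0"
      have dec: "decseq (\<lambda>M. ?X - ?V M)" unfolding decseq_def by auto
      have rB: "range (\<lambda>M. ?X - ?V M) \<subseteq> B" using XB VB by auto
      have lim: "(\<lambda>M. \<phi> (?X - ?V M)) \<longlonglongrightarrow> \<phi> (\<Inter>M. ?X - ?V M)"
        by (rule cont_lemma[OF rB dec])
      have E: "(\<Inter>M. ?X - ?V M) = {}"
      proof -
        have "x \<notin> ?X - ?V (Suc i)" if "x \<in> A i" for x i using that by auto
        then show ?thesis by blast
      qed
      have "(\<lambda>M. \<phi> (?X - ?V M)) \<longlonglongrightarrow> 0" using lim[unfolded E emp] .
      then have "eventually (\<lambda>M. \<phi> (?X - ?V M) < \<delta>/2) sequentially"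
        using d by (intro order_tendstoD(2)) auto
      then obtain M where M: "\<phi> (?X - ?V M) < \<delta>/2"
        unfolding eventually_sequentially by auto
      have "appr (?V M)" using appr_finUN AB Union(2) by blast
      then obtain n Y where Y: "Y \<in> U n" "\<phi> (sd (?V M) Y) < \<delta>/2" using d unfolding appr_def
        by (meson half_gt_zero)
      have "\<phi> (sd ?X Y) \<le> \<phi> ((?X - ?V M) \<union> sd (?V M) Y)"
        using XB VB U_B[OF Y(1)] by (intro phi_mono sd_B) (auto simp: sd_def)
      also have "\<dots> \<le> \<phi> (?X - ?V M) + \<phi> (sd (?V M) Y)"
        using XB VB U_B[OF Y(1)] by (intro phi_subadd sd_B) auto
      finally show "\<exists>n. \<exists>Y\<in>U n. \<phi> (sd ?X Y) < \<delta>" using M Y by force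
    qed
  qed
qed


lemma P_ne: "{} \<notin> P n"
  using part[of n] unfolding fin_partition_def by auto

lemma UP_B: "S \<subseteq> P n \<Longrightarrow> \<Union>S \<in> B"
  using U_B[of "\<Union>S" n] unfolding U_def by auto

lemma F_meas:
  fixes F :: "'a \<Rightarrow> nat" and k :: nat
  assumes "\<forall>i<k. {x\<in>J. F x = i} \<in> B" "A \<subseteq> {..<k}"
  shows "{x\<in>J. F x \<in> A} \<in> B"
proof -
  have eq: "{x\<in>J. F x \<in> A} = (\<Union>i\<in>A. {x\<in>J. F x = i})" by auto
  have "finite A" using assms(2) finite_lessThan[of k] by (rule finite_subset)
  then have "(\<Union>i\<in>A. {x\<in>J. F x = i}) \<in> B"
    by (rule local.finite_UN) (use assms in auto)
  then show ?thesis using eq by simp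
qed

definition blk :: "nat \<Rightarrow> 'a \<Rightarrow> 'a set" where "blk n j = (SOME Z. Z \<in> P n \<and> j \<in> Z)"

lemma blk: assumes "j \<in> J" shows "blk n j \<in> P n \<and> j \<in> blk n j"
proof -
  from assms P_J[of n] obtain Z where "Z \<in> P n" "j \<in> Z" by auto
  then show ?thesis unfolding blk_def by (rule someI[of _ Z, OF conjI])
qed

lemma blk_unique: assumes "Z \<in> P n" "j \<in> Z" shows "blk n j = Z"
proof -
  have "j \<in> J" using assms P_J[of n] by auto
  then have "blk n j \<in> P n" "j \<in> blk n j" using blk by auto
  then show ?thesis using assms P_disj[of n] by (meson disjointD disjoint_iff)
qed

lemma Qn_sub: assumes "x \<in> Qk k (P n) (Pow (P n)) (sf_quot \<phi>)" shows "x \<in> Qk k J B \<phi>"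
proof -
  from assms obtain F where F: "\<forall>Z\<in>P n. F Z < k"
    and x: "x = (\<lambda>A. if A \<subseteq> {..<k} then sf_quot \<phi> {Z\<in>P n. F Z \<in> A} else 0)"
    unfolding Qk_def by auto
  define G where "G j = F (blk n j)" for j
  have eq: "{j\<in>J. G j \<in> A} = \<Union>{Z\<in>P n. F Z \<in> A}" for A
  proof
    show "{j\<in>J. G j \<in> A} \<subseteq> \<Union>{Z\<in>P n. F Z \<in> A}"
    proof
      fix j assume "j \<in> {j\<in>J. G j \<in> A}"
      then show "j \<in> \<Union>{Z\<in>P n. F Z \<in> A}" using blk[of j n] unfolding G_def by auto
    qed
    show "\<Union>{Z\<in>P n. F Z \<in> A} \<subseteq> {j\<in>J. G j \<in> A}"
    proof
      fix j assume "j \<in> \<Union>{Z\<in>P n. F Z \<in> A}"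
      then obtain Z where Z: "Z \<in> P n" "F Z \<in> A" "j \<in> Z" by auto
      then show "j \<in> {j\<in>J. G j \<in> A}" using blk_unique[OF Z(1,3)] P_J[of n] unfolding G_def by auto
    qed
  qed
  have GB: "{j\<in>J. G j = i} \<in> B" for i
    using eq[of "{i}"] UP_B[of "{Z\<in>P n. F Z \<in> {i}}" n] by auto
  have Gk: "\<forall>j\<in>J. G j < k" using blk F unfolding G_def by auto
  show ?thesis unfolding Qk_def
    by (rule CollectI, rule exI[of _ G]) (use GB Gk in \<open>auto simp: x sf_quot_def eq\<close>)
qed

lemma approx_point:
  assumes y: "y \<in> Qk k J B \<phi>" and e: "\<epsilon> > 0"
  shows "eventually (\<lambda>n. \<exists>x\<in>Qk k (P n) (Pow (P n)) (sf_quot \<phi>). \<forall>A\<subseteq>{..<k}. \<bar>x A - y A\<bar> \<le> \<epsilon>) sequentially"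
proof -
  from y obtain F where F: "\<forall>x\<in>J. F x < k" "\<forall>i<k. {x\<in>J. F x = i} \<in> B"
    and yF: "y = (\<lambda>A. if A \<subseteq> {..<k} then \<phi> {x\<in>J. F x \<in> A} else 0)" unfolding Qk_def by auto
  define X where "X i = {x\<in>J. F x = i}" for i
  define \<delta> where "\<delta> = \<epsilon> / (real k + 1)"
  have d: "\<delta> > 0" using e by (simp add: \<delta>_def)
  have XB: "X i \<in> B" if "i < k" for i using F(2) that X_def by auto
  have ev1: "eventually (\<lambda>n. \<exists>Y\<in>U n. \<phi> (sd (X i) Y) < \<delta>) sequentially" if "i < k" for i
  proof -
    have "appr (X i)" using appr_all XB that by auto
    then obtain n0 Y where "Y \<in> U n0" "\<phi> (sd (X i) Y) < \<delta>" using d unfolding appr_def by auto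
    then show ?thesis unfolding eventually_sequentially using U_mono by blast
  qed
  have "eventually (\<lambda>n. \<forall>i\<in>{..<k}. \<exists>Y\<in>U n. \<phi> (sd (X i) Y) < \<delta>) sequentially"
    using ev1 by (intro eventually_ball_finite) auto
  then show ?thesis
  proof (rule eventually_mono)
    fix n assume "\<forall>i\<in>{..<k}. \<exists>Y\<in>U n. \<phi> (sd (X i) Y) < \<delta>"
    then obtain Yf where Yf: "\<forall>i\<in>{..<k}. Yf i \<in> U n \<and> \<phi> (sd (X i) (Yf i)) < \<delta>" by metis
    define G where "G j = (if \<exists>i<k. j \<in> Yf i then LEAST i. i < k \<and> j \<in> Yf i else 0)" for j
    define F' where "F' Z = G (SOME j. j \<in> Z)" for Z
    have Gconst: "G j = G j'" if "Z \<in> P n" "j \<in> Z" "j' \<in> Z" for Z j j'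
    proof -
      have "\<forall>i<k. (j \<in> Yf i \<longleftrightarrow> j' \<in> Yf i)" using block_dichot[OF that(1)] Yf that by blast
      then have "(\<lambda>i. i < k \<and> j \<in> Yf i) = (\<lambda>i. i < k \<and> j' \<in> Yf i)" by auto
      then show ?thesis unfolding G_def by metis
    qed
    have F'Z: "F' Z = G j" if "Z \<in> P n" "j \<in> Z" for Z j
      using Gconst[OF that(1) _ that(2)] someI[of "\<lambda>j. j \<in> Z", OF that(2)] unfolding F'_def by blast
    have Gk: "G j < k" if "j \<in> J" for j
    proof (cases "\<exists>i<k. j \<in> Yf i")
      case True then show ?thesis unfolding G_def by (auto intro: LeastI2_ex)
    next
      case False then show ?thesis using F(1) that unfolding G_def by auto
    qed
    have eqG: "\<Union>{Z\<in>P n. F' Z \<in> A} = {j\<in>J. G j \<in> A}" for A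
    proof
      show "\<Union>{Z\<in>P n. F' Z \<in> A} \<subseteq> {j\<in>J. G j \<in> A}" using F'Z P_J[of n] by fastforce
      show "{j\<in>J. G j \<in> A} \<subseteq> \<Union>{Z\<in>P n. F' Z \<in> A}"
      proof
        fix j assume j: "j \<in> {j\<in>J. G j \<in> A}"
        then obtain Z where "Z \<in> P n" "j \<in> Z" using P_J[of n] by auto
        then show "j \<in> \<Union>{Z\<in>P n. F' Z \<in> A}" using F'Z j by auto
      qed
    qed
    have GB: "{j\<in>J. G j \<in> A} \<in> B" for A
      unfolding eqG[symmetric] by (rule UP_B) auto
    let ?E = "\<Union>i<k. sd (X i) (Yf i)"
    have GF: "G j = F j" if "j \<in> J" "j \<notin> ?E" for j
    proof -
      have iff: "j \<in> Yf i \<longleftrightarrow> F j = i" if "i < k" for i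
      proof -
        have "j \<notin> sd (X i) (Yf i)" using \<open>j \<notin> ?E\<close> that by blast
        then show ?thesis using \<open>j \<in> J\<close> unfolding sd_def X_def by blast
      qed
      have Fk: "F j < k" using F(1) \<open>j \<in> J\<close> by auto
      then have ex: "\<exists>i<k. j \<in> Yf i" using iff by auto
      have "(LEAST i. i < k \<and> j \<in> Yf i) = F j"
        by (rule Least_equality) (use iff Fk in auto)
      then show ?thesis unfolding G_def using ex by simp
    qed
    have sdB: "sd (X i) (Yf i) \<in> B" if "i < k" for i using that Yf by (intro sd_B XB U_B[of _ n]) auto
    have EB: "?E \<in> B" by (rule local.finite_UN) (use sdB in auto)
    have phiE: "\<phi> ?E \<le> real k * \<delta>"
    proof -
      have "\<phi> ?E \<le> (\<Sum>i<k. \<phi> (sd (X i) (Yf i)))" by (rule phi_sum) (use sdB in auto)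
      also have "\<dots> \<le> (\<Sum>i<k. \<delta>)" by (rule sum_mono) (use Yf in \<open>auto intro: less_imp_le\<close>)
      finally show ?thesis by simp
    qed
    have kd: "real k * \<delta> \<le> \<epsilon>" using e unfolding \<delta>_def by (simp add: field_simps)
    define x where "x = (\<lambda>A. if A \<subseteq> {..<k} then sf_quot \<phi> {Z\<in>P n. F' Z \<in> A} else 0)"
    have F'k: "\<forall>Z\<in>P n. F' Z < k"
    proof
      fix Z assume Z: "Z \<in> P n"
      then obtain j where "j \<in> Z" using P_ne[of n] by (metis ex_in_conv)
      then show "F' Z < k" using F'Z[OF Z] Gk Z P_J[of n] by auto
    qed
    have xQ: "x \<in> Qk k (P n) (Pow (P n)) (sf_quot \<phi>)"
      unfolding Qk_def x_def by (rule CollectI, rule exI[of _ F']) (use F'k in auto)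
    have "\<forall>A\<subseteq>{..<k}. \<bar>x A - y A\<bar> \<le> \<epsilon>"
    proof (intro allI impI)
      fix A assume A: "A \<subseteq> {..<k}"
      have FB: "{j\<in>J. F j \<in> A} \<in> B" using F_meas F(2) A by blast
      have xA: "x A = \<phi> {j\<in>J. G j \<in> A}" using A eqG unfolding x_def sf_quot_def by simp
      have yA: "y A = \<phi> {j\<in>J. F j \<in> A}" using A yF by simp
      have "sd {j\<in>J. G j \<in> A} {j\<in>J. F j \<in> A} \<subseteq> ?E"
      proof
        fix j assume j: "j \<in> sd {j\<in>J. G j \<in> A} {j\<in>J. F j \<in> A}"
        show "j \<in> ?E"
        proof (rule ccontr)
          assume "j \<notin> ?E"
          moreover have "j \<in> J" using j unfolding sd_def by auto
          ultimately have "G j = F j" using GF by blast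
          then show False using j unfolding sd_def by auto
        qed
      qed
      then have "\<phi> (sd {j\<in>J. G j \<in> A} {j\<in>J. F j \<in> A}) \<le> \<phi> ?E"
        using GB FB EB sd_B by (intro phi_mono) auto
      then show "\<bar>x A - y A\<bar> \<le> \<epsilon>" using phi_diff_abs[OF GB[of A] FB] phiE kd xA yA by linarith
    qed
    then show "\<exists>x\<in>Qk k (P n) (Pow (P n)) (sf_quot \<phi>). \<forall>A\<subseteq>{..<k}. \<bar>x A - y A\<bar> \<le> \<epsilon>"
      using xQ by blast
  qed
qed

lemma Q_bound: obtains C where "\<And>y A. y \<in> Qk k J B \<phi> \<Longrightarrow> \<bar>y A\<bar> \<le> C"
proof -
  obtain C where C: "\<forall>X\<in>B. \<bar>\<phi> X\<bar> \<le> C" using bnd unfolding sf_bounded_def by auto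
  have C0: "0 \<le> C" using C empty_sets by force
  show ?thesis
  proof (rule that[of C])
    fix y A assume "y \<in> Qk k J B \<phi>"
    then obtain F where F: "\<forall>i<k. {x\<in>J. F x = i} \<in> B"
      and yF: "y = (\<lambda>A. if A \<subseteq> {..<k} then \<phi> {x\<in>J. F x \<in> A} else 0)" unfolding Qk_def by auto
    show "\<bar>y A\<bar> \<le> C"
    proof (cases "A \<subseteq> {..<k}")
      case True then show ?thesis using yF C F_meas[OF F True] by auto
    next
      case False then show ?thesis using yF C0 by auto
    qed
  qed
qed

lemma main: "(\<lambda>n. hausdist_k k (Qk k (P n) (Pow (P n)) (sf_quot \<phi>)) (Qk k J B \<phi>)) \<longlonglongrightarrow> 0"
proof (rule order_tendstoI)
  fix a :: ereal assume "a < 0"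
  then show "eventually (\<lambda>n. a < hausdist_k k (Qk k (P n) (Pow (P n)) (sf_quot \<phi>)) (Qk k J B \<phi>)) sequentially"
    by (intro always_eventually allI) (rule less_le_trans[OF _ haus_ge])
next
  fix a :: ereal assume a: "0 < a"
  obtain z where z: "0 < ereal z" "ereal z < a" using ereal_dense2[OF a] by auto
  then have z0: "z > 0" by simp
  define s :: real where "s = sqrt (2^k)"
  have s0: "s > 0" unfolding s_def by simp
  define d where "d = z / (2 * s)"
  have d0: "d > 0" using z0 s0 by (simp add: d_def)
  have sd2: "s * (2 * d) = z" using s0 by (simp add: d_def)
  obtain C where C: "\<And>y A. y \<in> Qk k J B \<phi> \<Longrightarrow> \<bar>y A\<bar> \<le> C" using Q_bound by blast
  obtain R where R: "finite R" "R \<subseteq> Qk k J B \<phi>" "\<forall>y\<in>Qk k J B \<phi>. \<exists>r\<in>R. \<forall>A\<subseteq>{..<k}. \<bar>y A - r A\<bar> \<le> d"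
    using grid[of "Qk k J B \<phi>" C d k] C d0 by blast
  have "eventually (\<lambda>n. \<forall>r\<in>R. \<exists>x\<in>Qk k (P n) (Pow (P n)) (sf_quot \<phi>). \<forall>A\<subseteq>{..<k}. \<bar>x A - r A\<bar> \<le> d) sequentially"
    using R(1,2) approx_point d0 by (intro eventually_ball_finite) auto
  then show "eventually (\<lambda>n. hausdist_k k (Qk k (P n) (Pow (P n)) (sf_quot \<phi>)) (Qk k J B \<phi>) < a) sequentially"
  proof (rule eventually_mono)
    fix n assume H: "\<forall>r\<in>R. \<exists>x\<in>Qk k (P n) (Pow (P n)) (sf_quot \<phi>). \<forall>A\<subseteq>{..<k}. \<bar>x A - r A\<bar> \<le> d"
    have "hausdist_k k (Qk k (P n) (Pow (P n)) (sf_quot \<phi>)) (Qk k J B \<phi>) \<le> ereal z"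
    proof (rule haus_le)
      show "0 \<le> z" using z0 by simp
      show "\<forall>x\<in>Qk k (P n) (Pow (P n)) (sf_quot \<phi>). \<exists>y\<in>Qk k J B \<phi>. eucl_k k x y \<le> z"
        using Qn_sub eucl_self z0 by (metis less_imp_le)
      show "\<forall>y\<in>Qk k J B \<phi>. \<exists>x\<in>Qk k (P n) (Pow (P n)) (sf_quot \<phi>). eucl_k k x y \<le> z"
      proof
        fix y assume y: "y \<in> Qk k J B \<phi>"
        then obtain r where r: "r \<in> R" "\<forall>A\<subseteq>{..<k}. \<bar>y A - r A\<bar> \<le> d" using R(3) by blast
        then obtain x where x: "x \<in> Qk k (P n) (Pow (P n)) (sf_quot \<phi>)" "\<forall>A\<subseteq>{..<k}. \<bar>x A - r A\<bar> \<le> d"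
          using H by blast
        have "\<forall>A\<subseteq>{..<k}. \<bar>x A - y A\<bar> \<le> 2 * d"
        proof (intro allI impI)
          fix A assume "A \<subseteq> {..<k}"
          then have "\<bar>y A - r A\<bar> \<le> d" "\<bar>x A - r A\<bar> \<le> d" using r x by auto
          then show "\<bar>x A - y A\<bar> \<le> 2 * d" by linarith
        qed
        then have "eucl_k k x y \<le> s * (2 * d)" unfolding s_def using d0 by (intro eucl_bound) auto
        then show "\<exists>x\<in>Qk k (P n) (Pow (P n)) (sf_quot \<phi>). eucl_k k x y \<le> z" using x(1) sd2 by auto
      qed
    qed
    then show "hausdist_k k (Qk k (P n) (Pow (P n)) (sf_quot \<phi>)) (Qk k J B \<phi>) < a"
      using z(2) by (rule le_less_trans)
  qed
qed

end

theorem theorem4p3: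
  fixes J :: "'a set" and B :: "'a set set" and \<phi> :: "'a set \<Rightarrow> real"
    and P :: "nat \<Rightarrow> 'a set set"
  assumes "sigma_algebra J B"
    and "sf_bounded B \<phi>" and "sf_increasing B \<phi>" and "sf_submodular B \<phi>"
    and "sf_cont_above B \<phi>" and "\<phi> {} = 0"
    and "\<And>n. fin_partition J B (P n)"
    and "\<And>n. partition_refines (P (Suc n)) (P n)"
    and "sigma_sets J (\<Union>n. P n) = B"
  shows "quot_conv P (\<lambda>n. Pow (P n)) (\<lambda>n. sf_quot \<phi>) J B \<phi>"
proof -
  interpret T: thm43 J B \<phi> P
    using assms unfolding thm43_def thm43_axioms_def by auto
  show ?thesis unfolding quot_conv_def using T.main by blast
qed

end
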